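(* For every field $\mathbb{F}$, every $n^d\times n^d$ matrix $M$ over $\mathbb{F}$ and every $\kappa\subseteq[d]$, \[\mathrm{rank}(M^{\top_\kappa})\le n^{2\min\{|\kappa|,\,d-|\kappa|\}}\,\mathrm{rank}(M).\]
   Context: Rows and columns are indexed by $[n]^d$. For $k\in[d]$, $M^{\top_k}_{(i_1,\dots,i_d),(j_1,\dots,j_d)}=M_{(\dots,i_{k-1},j_k,i_{k+1},\dots),(\dots,j_{k-1},i_k,j_{k+1},\dots)}$ (swap the $k$-th row and column indices); $M^{\top_\kappa}$ is the composition over $k\in\kappa$. *)

theory Defs
  imports "Jordan_Normal_Form.DL_Rank"
begin

text \<open>Multi-indices in [n]^d (0-based: coordinates 0..d-1, entries 0..n-1) are encoded
  as numbers in {0..<n^d} via base-n digits: the tuple (i_0,...,i_(d-1)) corresponds to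
  the sum of i_k * n^k.\<close>

definition digit :: "nat \<Rightarrow> nat \<Rightarrow> nat \<Rightarrow> nat" where
  "digit n k r = (r div n ^ k) mod n"

definition mix_index :: "nat \<Rightarrow> nat \<Rightarrow> nat set \<Rightarrow> nat \<Rightarrow> nat \<Rightarrow> nat" where
  "mix_index n d \<kappa> r c = (\<Sum>k<d. (if k \<in> \<kappa> then digit n k c else digit n k r) * n ^ k)"

text \<open>Partial transpose M^{T_kappa}: swap the k-th row and column index for all k in kappa.\<close>
definition partial_transpose :: "nat \<Rightarrow> nat \<Rightarrow> nat set \<Rightarrow> 'a mat \<Rightarrow> 'a mat" where
  "partial_transpose n d \<kappa> M =
     mat (n ^ d) (n ^ d) (\<lambda>(i, j). M $$ (mix_index n d \<kappa> i j, mix_index n d \<kappa> j i))"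

end

theory Submission
  imports Defs
begin

lemma (in vec_space) max_indpt_cols:
  assumes "A \<in> carrier_mat n nc"
  shows "\<exists>S. finite S \<and> maximal S (\<lambda>T. T \<subseteq> set (cols A) \<and> lin_indpt T)"
proof -
  have e: "lin_indpt {}"
    by (metis (no_types) empty_subsetI fin_dim finite_basis_exists subset_li_is_li vec_vs vectorspace.basis_def)
  show ?thesis
    using maximal_exists_superset[of "set (cols A)" "(\<lambda>T. T \<subseteq> set (cols A) \<and> lin_indpt T)" "{}"] e
    by auto
qed

lemma (in vec_space) rank_le_card_sum:
  assumes X: "X \<in> carrier_mat n nc" and T: "finite T"
  and eq: "\<And>i j. i < n \<Longrightarrow> j < nc \<Longrightarrow> X $$ (i,j) = (\<Sum>t\<in>T. f i t * g t j)"
  shows "rank X \<le> card T"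
proof -
  define h where "h = (\<lambda>t. vec n (\<lambda>i. f i t))"
  define G where "G = h ` T"
  have Gc: "G \<subseteq> carrier_vec n" unfolding G_def h_def by auto
  have finG: "finite G" unfolding G_def using T by auto
  have cols: "set (cols X) \<subseteq> span G"
  proof
    fix v assume "v \<in> set (cols X)"
    then obtain j where j: "j < nc" "v = col X j" using X
      by (metis cols_length cols_nth in_set_conv_nth carrier_matD(2))
    define a where "a w = (\<Sum>t\<in>{t\<in>T. h t = w}. g t j)" for w
    have "v = lincomb a G"
    proof (rule eq_vecI)
      show "dim_vec v = dim_vec (lincomb a G)" using lincomb_dim[OF finG Gc] j X by auto
      fix i assume "i < dim_vec (lincomb a G)"
      then have i: "i < n" using lincomb_dim[OF finG Gc] by auto
      have "lincomb a G $ i = (\<Sum>w\<in>G. a w * w $ i)" using lincomb_index[OF i Gc] .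
      also have "\<dots> = (\<Sum>w\<in>G. (\<Sum>t\<in>{t\<in>T. h t = w}. g t j * f i t))"
        unfolding a_def sum_distrib_right
        by (intro sum.cong refl, auto simp: h_def i)
      also have "\<dots> = (\<Sum>t\<in>T. g t j * f i t)"
        unfolding G_def by (rule sum.image_gen[symmetric, OF T])
      also have "\<dots> = X $$ (i,j)" using eq[OF i j(1)] by (simp add: mult.commute)
      finally show "v $ i = lincomb a G $ i" using j X i by auto
    qed
    then show "v \<in> span G" using finG by (intro in_spanI) auto
  qed
  obtain S where S: "finite S" "maximal S (\<lambda>T. T \<subseteq> set (cols X) \<and> lin_indpt T)"
    using max_indpt_cols[OF X] by blast
  have r: "rank X = card S" using rank_card_indpt[OF X S(2)] .
  have "S \<subseteq> span G" "lin_indpt S" using S(2) cols unfolding maximal_def by auto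
  from replacement[OF S(1) finG Gc this(2) this(1)] have "card S \<le> card G" by auto
  also have "card G \<le> card T" unfolding G_def by (rule card_image_le[OF T])
  finally show ?thesis using r by simp
qed

lemma (in vec_space) rank_factor:
  assumes M: "M \<in> carrier_mat n nc"
  shows "\<exists>S::'a vec set. finite S \<and> card S = rank M \<and>
     (\<exists>g. \<forall>i<n. \<forall>j<nc. M $$ (i,j) = (\<Sum>v\<in>S. v $ i * g v j))"
proof -
  obtain S where S: "finite S" "maximal S (\<lambda>T. T \<subseteq> set (cols M) \<and> lin_indpt T)"
    using max_indpt_cols[OF M] by blast
  have r: "rank M = card S" using rank_card_indpt[OF M S(2)] .
  have Ssub: "S \<subseteq> set (cols M)" and ind: "lin_indpt S" using S(2) unfolding maximal_def by auto
  have colsc: "set (cols M) \<subseteq> carrier_vec n" using M cols_dim by blast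
  have Sc: "S \<subseteq> carrier_vec n" using Ssub colsc by auto
  have insp: "col M j \<in> span S" if j: "j < nc" for j
  proof (rule ccontr)
    assume nin: "col M j \<notin> span S"
    have cin: "col M j \<in> set (cols M)" using j M by (metis cols_length cols_nth nth_mem carrier_matD(2))
    have cc: "col M j \<in> carrier_vec n" using cin colsc by auto
    have "col M j \<notin> S" using nin in_own_span[OF Sc] by auto
    then have "lin_indpt (S \<union> {col M j})"
      using lin_dep_iff_in_span[OF Sc ind cc] nin by auto
    then have "S \<union> {col M j} = S" using S(2) cin Ssub unfolding maximal_def by blast
    then show False using \<open>col M j \<notin> S\<close> by auto
  qed
  have "\<forall>j. \<exists>a A. j < nc \<longrightarrow> (col M j = lincomb a A \<and> finite A \<and> A \<subseteq> S)"
    using insp in_spanE by blast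
  then obtain a A where aA: "\<And>j. j < nc \<Longrightarrow> col M j = lincomb (a j) (A j) \<and> finite (A j) \<and> A j \<subseteq> S"
    by metis
  define g where "g v j = (if v \<in> A j then a j v else 0)" for v j
  have "\<forall>i<n. \<forall>j<nc. M $$ (i,j) = (\<Sum>v\<in>S. v $ i * g v j)"
  proof (intro allI impI)
    fix i j assume i: "i < n" and j: "j < nc"
    have AS: "A j \<subseteq> S" "finite (A j)" using aA[OF j] by auto
    have "M $$ (i,j) = col M j $ i" using M i j by auto
    also have "\<dots> = lincomb (a j) (A j) $ i" using aA[OF j] by simp
    also have "\<dots> = (\<Sum>v\<in>A j. a j v * v $ i)" using lincomb_index[OF i] AS Sc by auto
    also have "\<dots> = (\<Sum>v\<in>S. v $ i * g v j)"
      by (rule sum.mono_neutral_cong_left[OF S(1) AS(1)]) (auto simp: g_def)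
    finally show "M $$ (i,j) = (\<Sum>v\<in>S. v $ i * g v j)" .
  qed
  then show ?thesis using S(1) r by auto
qed


lemma digit_lt: assumes "i < n ^ d" "k < d" shows "digit n k i < n"
proof -
  have "n > 0"
  proof (rule ccontr)
    assume "\<not> n > 0"
    then have "n = 0" by simp
    moreover have "d \<noteq> 0" using assms(2) by simp
    ultimately have "n ^ d = 0" by (simp add: power_0_left)
    then show False using assms(1) by (metis less_nat_zero_code)
  qed
  then show ?thesis unfolding digit_def by simp
qed

lemma digits_sum_lt:
  fixes n :: nat
  shows "(\<forall>k<d. c k < n) \<Longrightarrow> (\<Sum>k<d. c k * n ^ k) < n ^ d"
proof (induction d)
  case 0 then show ?case by simp
next
  case (Suc d)
  have IH: "(\<Sum>k<d. c k * n ^ k) < n ^ d" using Suc by auto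
  have cd: "c d + 1 \<le> n" using Suc.prems by auto
  have "(\<Sum>k<Suc d. c k * n ^ k) = (\<Sum>k<d. c k * n ^ k) + c d * n ^ d" by simp
  also have "\<dots> < n ^ d + c d * n ^ d" using IH by simp
  also have "\<dots> = (c d + 1) * n ^ d" by simp
  also have "\<dots> \<le> n * n ^ d" using cd by (rule mult_right_mono) simp
  finally show ?case by simp
qed

lemma mix_lt: assumes "i < n ^ d" "j < n ^ d" shows "mix_index n d \<kappa> i j < n ^ d"
  unfolding mix_index_def
  by (rule digits_sum_lt) (auto intro: digit_lt assms)

lemma sum_if_const: "(\<Sum>x\<in>A. if c then f x else 0) = (if c then sum f A else 0)"
  by auto

lemma partial_bound:
  fixes X :: "'a::field mat" and p :: "nat \<Rightarrow> 't \<Rightarrow> 'a" and q :: "'t \<Rightarrow> nat \<Rightarrow> 'a"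
  assumes X: "X \<in> carrier_mat (n ^ d) (n ^ d)" and T: "finite T" and L: "L \<subseteq> {0..<d}"
  and eq: "\<And>i j. i < n ^ d \<Longrightarrow> j < n ^ d \<Longrightarrow>
      X $$ (i,j) = (\<Sum>t\<in>T. p (mix_index n d L i j) t * q t (mix_index n d L j i))"
  shows "vec_space.rank (n ^ d) X \<le> n ^ (2 * card L) * card T"
proof -
  define N where "N = n ^ d"
  define dg where "dg i = restrict (\<lambda>k. digit n k i) L" for i
  define P where "P = dg ` {0..<N}"
  define sg where "sg b i = (\<Sum>k<d. (if k \<in> L then b k else digit n k i) * n ^ k)" for b :: "nat \<Rightarrow> nat" and i
  have mix: "mix_index n d L i j = sg (dg j) i" for i j
    unfolding mix_index_def sg_def dg_def by (intro sum.cong) auto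
  have finP: "finite P" unfolding P_def by auto
  have finL: "finite L" using L finite_subset by blast
  have PP: "P \<subseteq> PiE L (\<lambda>_. {0..<n})"
    unfolding P_def dg_def N_def using L by (auto intro!: digit_lt)
  have cardP: "card P \<le> n ^ card L"
  proof -
    have "card P \<le> card (PiE L (\<lambda>_. {0..<n}))"
      by (rule card_mono[OF _ PP]) (simp add: finL finite_PiE)
    also have "\<dots> = n ^ card L" by (simp add: card_PiE finL)
    finally show ?thesis .
  qed
  define U where "U = P \<times> P \<times> T"
  define F where "F i s = (case s of (a,b,t) \<Rightarrow> if a = dg i then p (sg b i) t else 0)" for i s
  define G where "G s j = (case s of (a,b,t) \<Rightarrow> if b = dg j then q t (sg a j) else 0)" for s j
  interpret vec_space "TYPE('a)" N .
  have "rank X \<le> card U"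
  proof (rule rank_le_card_sum[where f=F and g=G and T=U and nc=N])
    show "X \<in> carrier_mat N N" using X N_def by simp
    show "finite U" unfolding U_def using finP T by auto
    fix i j assume i: "i < N" and j: "j < N"
    have di: "dg i \<in> P" and dj: "dg j \<in> P" unfolding P_def using i j by auto
    have "(\<Sum>s\<in>U. F i s * G s j) = (\<Sum>a\<in>P. \<Sum>b\<in>P. \<Sum>t\<in>T. F i (a,b,t) * G (a,b,t) j)"
      unfolding U_def by (simp add: sum.cartesian_product)
    also have "\<dots> = (\<Sum>a\<in>P. if a = dg i then (\<Sum>b\<in>P. if b = dg j then
          (\<Sum>t\<in>T. p (sg b i) t * q t (sg a j)) else 0) else 0)"
    proof (intro sum.cong refl)
      fix a
      show "(\<Sum>b\<in>P. \<Sum>t\<in>T. F i (a,b,t) * G (a,b,t) j) = (if a = dg i then (\<Sum>b\<in>P. if b = dg j then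
          (\<Sum>t\<in>T. p (sg b i) t * q t (sg a j)) else 0) else 0)"
      proof (cases "a = dg i")
        case True
        have "(\<Sum>b\<in>P. \<Sum>t\<in>T. F i (a,b,t) * G (a,b,t) j) = (\<Sum>b\<in>P. if b = dg j then
          (\<Sum>t\<in>T. p (sg b i) t * q t (sg a j)) else 0)"
          by (intro sum.cong refl) (auto simp: F_def G_def True)
        then show ?thesis using True by simp
      next
        case False then show ?thesis by (simp add: F_def G_def)
      qed
    qed
    also have "\<dots> = (\<Sum>t\<in>T. p (sg (dg j) i) t * q t (sg (dg i) j))"
      using di dj finP by (simp add: sum.delta')
    also have "\<dots> = X $$ (i,j)" using eq i j unfolding N_def mix by simp
    finally show "X $$ (i,j) = (\<Sum>s\<in>U. F i s * G s j)" by simp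
  qed
  also have "card U = card P * card P * card T" unfolding U_def by (simp add: card_cartesian_product)
  also have "\<dots> \<le> n ^ card L * n ^ card L * card T"
    using cardP by (intro mult_le_mono mult_le_mono1) auto
  also have "\<dots> = n ^ (2 * card L) * card T" by (simp add: power_add[symmetric] mult_2)
  finally show ?thesis unfolding N_def .
qed

theorem lemma3p8:
  fixes M :: "'a::field mat" and n d :: nat and \<kappa> :: "nat set"
  assumes "M \<in> carrier_mat (n ^ d) (n ^ d)"
    and "\<kappa> \<subseteq> {0..<d}"
  shows "vec_space.rank (n ^ d) (partial_transpose n d \<kappa> M)
           \<le> n ^ (2 * min (card \<kappa>) (d - card \<kappa>)) * vec_space.rank (n ^ d) M"
proof -
  define N where "N = n ^ d"
  interpret vec_space "TYPE('a)" N .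
  have MC: "M \<in> carrier_mat N N" using assms(1) N_def by simp
  obtain S :: "'a vec set" and g where S: "finite S" "card S = rank M"
    and g: "\<And>i j. i < N \<Longrightarrow> j < N \<Longrightarrow> M $$ (i,j) = (\<Sum>v\<in>S. v $ i * g v j)"
    using rank_factor[OF MC] by blast
  define X where "X = partial_transpose n d \<kappa> M"
  have XC: "X \<in> carrier_mat (n ^ d) (n ^ d)" unfolding X_def partial_transpose_def by simp
  have Xe: "X $$ (i,j) = (\<Sum>v\<in>S. v $ (mix_index n d \<kappa> i j) * g v (mix_index n d \<kappa> j i))"
    if "i < n ^ d" "j < n ^ d" for i j
    using that g[of "mix_index n d \<kappa> i j" "mix_index n d \<kappa> j i"] mix_lt[of i n d j] mix_lt[of j n d i]
    unfolding X_def partial_transpose_def N_def by simp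
  have b1: "rank X \<le> n ^ (2 * card \<kappa>) * rank M"
    using partial_bound[OF XC S(1) assms(2), of "\<lambda>x v. v $ x" g] Xe S(2) unfolding N_def by simp
  define K where "K = {0..<d} - \<kappa>"
  have cK: "card K = d - card \<kappa>" unfolding K_def using assms(2) by (simp add: card_Diff_subset finite_subset)
  have mixK: "mix_index n d \<kappa> i j = mix_index n d K j i" for i j
    unfolding mix_index_def K_def by (intro sum.cong refl) auto
  have b2: "rank X \<le> n ^ (2 * card K) * rank M"
    using partial_bound[OF XC S(1), of K "\<lambda>x v. g v x" "\<lambda>v y. v $ y"] Xe S(2)
    unfolding N_def mixK by (simp add: K_def mult.commute)
  show ?thesis
  proof (cases "card \<kappa> \<le> d - card \<kappa>")
    case True then show ?thesis using b1 unfolding X_def N_def by (simp add: min_def)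
  next
    case False then show ?thesis using b2 cK unfolding X_def N_def by (simp add: min_def)
  qed
qed

end
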